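(* Fix $R>1$. For $t\ge0$ let $h=h_t\in H^1(1,R)$ be a minimizer of \[ E[h]=\int_1^R\left\{\frac12(h')^2+\frac3{r^2}h^2+\frac t8(1-h^2)^2+\frac{h_+}{8}(1+3h^4-4h^3)\right\}r^2\,dr \] subject to $h(1)=h(R)=1$. Then $0<h\le1$ on $[1,R]$ for all $t\ge0$, and $h_t\to1$ uniformly on $[1,R]$ as $t\to\infty$.
   Context: $h_+=\frac{3+\sqrt{9+8t}}{4}$. *)

theory Defs
  imports "HOL-Analysis.Analysis"
begin

text \<open>Sobolev space H^1(a,b) in one dimension, via the continuous representative:
  h belongs to H^1(a,b) with weak derivative g iff g is square integrable on [a,b]
  (hence integrable) and h(x) = h(a) + int_a^x g for all x in [a,b].\<close>
definition H1 :: "real \<Rightarrow> real \<Rightarrow> (real \<Rightarrow> real) \<Rightarrow> (real \<Rightarrow> real) \<Rightarrow> bool" where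
  "H1 a b h g \<longleftrightarrow>
     set_integrable lborel {a..b} g \<and>
     set_integrable lborel {a..b} (\<lambda>x. (g x)\<^sup>2) \<and>
     (\<forall>x\<in>{a..b}. h x = h a + (LINT s:{a..x}|lborel. g s))"

definition hplus :: "real \<Rightarrow> real" where
  "hplus t = (3 + sqrt (9 + 8 * t)) / 4"

definition energy :: "real \<Rightarrow> real \<Rightarrow> (real \<Rightarrow> real) \<Rightarrow> (real \<Rightarrow> real) \<Rightarrow> real" where
  "energy t R h g =
     (LINT r:{1..R}|lborel.
        ((1/2) * (g r)\<^sup>2 + 3 / r\<^sup>2 * (h r)\<^sup>2 + t / 8 * (1 - (h r)\<^sup>2)\<^sup>2
         + hplus t / 8 * (1 + 3 * (h r)^4 - 4 * (h r)^3)) * r\<^sup>2)"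

definition is_minimizer :: "real \<Rightarrow> real \<Rightarrow> (real \<Rightarrow> real) \<Rightarrow> bool" where
  "is_minimizer t R h \<longleftrightarrow>
     (\<exists>g. H1 1 R h g \<and> h 1 = 1 \<and> h R = 1 \<and>
        (\<forall>k k'. H1 1 R k k' \<and> k 1 = 1 \<and> k R = 1 \<longrightarrow> energy t R h g \<le> energy t R k k'))"

end

theory Submission
  imports Defs
begin


lemma H1_D:
  assumes "H1 a b h g" "a \<le> b"
  shows "g integrable_on {a..b}" "(\<lambda>x. (g x)\<^sup>2) integrable_on {a..b}"
    "\<And>x. x\<in>{a..b} \<Longrightarrow> h x = h a + integral {a..x} g"
    "continuous_on {a..b} h"
    "set_borel_measurable lborel {a..b} g"
    "set_borel_measurable lborel {a..b} (\<lambda>x. (g x)\<^sup>2)"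
proof -
  have H: "set_integrable lborel {a..b} g \<and> set_integrable lborel {a..b} (\<lambda>x. (g x)\<^sup>2) \<and>
     (\<forall>x\<in>{a..b}. h x = h a + (LINT s:{a..x}|lborel. g s))" using assms(1) unfolding H1_def .
  have gi: "set_integrable lborel {a..b} g" using H by (rule conjunct1)
  have g2: "set_integrable lborel {a..b} (\<lambda>x. (g x)\<^sup>2)" using H by (metis (no_types))
  have hx: "\<And>x. x\<in>{a..b} \<Longrightarrow> h x = h a + (LINT s:{a..x}|lborel. g s)"
    using H by (metis (no_types))
  show "g integrable_on {a..b}" using set_borel_integral_eq_integral(1)[OF gi] .
  show "(\<lambda>x. (g x)\<^sup>2) integrable_on {a..b}" using set_borel_integral_eq_integral(1)[OF g2] .
  show hx': "\<And>x. x\<in>{a..b} \<Longrightarrow> h x = h a + integral {a..x} g"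
  proof -
    fix x assume x: "x \<in> {a..b}"
    have "set_integrable lborel {a..x} g"
      by (rule set_integrable_subset[OF gi]) (use x in auto)
    then have "(LINT s:{a..x}|lborel. g s) = integral {a..x} g" by (rule set_borel_integral_eq_integral(2))
    then show "h x = h a + integral {a..x} g" using hx[OF x] by simp
  qed
  have "continuous_on {a..b} (\<lambda>x. h a + integral {a..x} g)"
    by (intro continuous_on_add continuous_on_const indefinite_integral_continuous_1 set_borel_integral_eq_integral(1)[OF gi])
  then show "continuous_on {a..b} h"
  proof (rule continuous_on_eq)
    fix x assume "x \<in> {a..b}"
    then show "h a + integral {a..x} g = h x" by (rule hx'[symmetric])
  qed
  show "set_borel_measurable lborel {a..b} g"
    using gi unfolding set_integrable_def set_borel_measurable_def by (rule borel_measurable_integrable)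
  show "set_borel_measurable lborel {a..b} (\<lambda>x. (g x)\<^sup>2)"
    using g2 unfolding set_integrable_def set_borel_measurable_def by (rule borel_measurable_integrable)
qed

definition Vp :: "real \<Rightarrow> real \<Rightarrow> real \<Rightarrow> real" where
  "Vp t x r = (3 / r\<^sup>2 * x\<^sup>2 + t / 8 * (1 - x\<^sup>2)\<^sup>2 + hplus t / 8 * (1 + 3 * x^4 - 4 * x^3)) * r\<^sup>2"

definition Ig :: "real \<Rightarrow> (real \<Rightarrow> real) \<Rightarrow> (real \<Rightarrow> real) \<Rightarrow> real \<Rightarrow> real" where
  "Ig t h g r = ((1/2) * (g r)\<^sup>2 + 3 / r\<^sup>2 * (h r)\<^sup>2 + t / 8 * (1 - (h r)\<^sup>2)\<^sup>2
         + hplus t / 8 * (1 + 3 * (h r)^4 - 4 * (h r)^3)) * r\<^sup>2"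

lemma Ig_split: "Ig t h g r = (1/2) * (g r)\<^sup>2 * r\<^sup>2 + Vp t (h r) r"
  unfolding Ig_def Vp_def by (simp add: algebra_simps)

lemma energy_HK:
  assumes "H1 1 R h g" "1 \<le> R"
  shows "set_integrable lborel {1..R} (Ig t h g)" "Ig t h g integrable_on {1..R}"
    "energy t R h g = integral {1..R} (Ig t h g)"
proof -
  have cont: "continuous_on {1..R} h" using H1_D(4)[OF assms] .
  have g2: "set_integrable lborel {1..R} (\<lambda>x. (g x)\<^sup>2)" using assms(1) unfolding H1_def by (metis (no_types))
  have mg2: "set_borel_measurable lborel {1..R} (\<lambda>x. (g x)\<^sup>2)" using H1_D(6)[OF assms] .
  have "set_borel_measurable lborel {1..R} (\<lambda>x. (1/2) * (g x)\<^sup>2 * x\<^sup>2)"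
  proof -
    have e: "(\<lambda>x. indicator {1..R} x *\<^sub>R ((1/2) * (g x)\<^sup>2 * x\<^sup>2)) = (\<lambda>x. ((1/2) * x\<^sup>2) * (indicator {1..R} x *\<^sub>R (g x)\<^sup>2))"
      by (auto simp: fun_eq_iff)
    show ?thesis unfolding set_borel_measurable_def e
      using mg2 unfolding set_borel_measurable_def by measurable
  qed
  then have i1: "set_integrable lborel {1..R} (\<lambda>x. (1/2) * (g x)\<^sup>2 * x\<^sup>2)"
  proof (rule set_integrable_bound[where f="\<lambda>x. R\<^sup>2 * (g x)\<^sup>2", rotated])
    show "set_integrable lborel {1..R} (\<lambda>x. R\<^sup>2 * (g x)\<^sup>2)" using g2 by simp
    show "AE x in lborel. x \<in> {1..R} \<longrightarrow> norm ((1/2) * (g x)\<^sup>2 * x\<^sup>2) \<le> norm (R\<^sup>2 * (g x)\<^sup>2)"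
    proof (rule AE_I2, rule impI)
      fix x :: real assume x: "x \<in> {1..R}"
      have "x\<^sup>2 \<le> R\<^sup>2" using x by (intro power_mono) auto
      then have "(g x)\<^sup>2 * x\<^sup>2 \<le> (g x)\<^sup>2 * R\<^sup>2" by (rule mult_left_mono) simp
      moreover have "0 \<le> (g x)\<^sup>2 * x\<^sup>2" by simp
      ultimately show "norm ((1/2) * (g x)\<^sup>2 * x\<^sup>2) \<le> norm (R\<^sup>2 * (g x)\<^sup>2)" by (simp add: mult.commute)
        (smt (verit) zero_le_power2 mult_nonneg_nonneg)
    qed
  qed
  have "continuous_on {1..R} (\<lambda>r. Vp t (h r) r)"
    unfolding Vp_def by (intro continuous_intros cont) auto
  then have i2: "set_integrable lborel {1..R} (\<lambda>r. Vp t (h r) r)"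
    by (rule borel_integrable_atLeastAtMost')
  have "set_integrable lborel {1..R} (\<lambda>r. (1/2) * (g r)\<^sup>2 * r\<^sup>2 + Vp t (h r) r)"
    using set_integral_add(1)[OF i1 i2] by simp
  then show si: "set_integrable lborel {1..R} (Ig t h g)" by (simp add: Ig_split[abs_def] del: times_divide_eq_left times_divide_eq_right)
  show "Ig t h g integrable_on {1..R}" using set_borel_integral_eq_integral(1)[OF si] .
  have "energy t R h g = (LINT r:{1..R}|lborel. Ig t h g r)" unfolding energy_def Ig_def ..
  also have "\<dots> = integral {1..R} (Ig t h g)" using set_borel_integral_eq_integral(2)[OF si] .
  finally show "energy t R h g = integral {1..R} (Ig t h g)" .
qed



lemma H1_diff:
  assumes "H1 1 R h g" "1 \<le> u" "u \<le> v" "v \<le> R"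
  shows "h v - h u = integral {u..v} g"
proof -
  have R: "1 \<le> R" using assms by linarith
  have gi: "g integrable_on {1..R}" using H1_D(1)[OF assms(1) R] .
  have "h v = h 1 + integral {1..v} g" by (rule H1_D(3)[OF assms(1) R]) (use assms in auto)
  moreover have "h u = h 1 + integral {1..u} g" by (rule H1_D(3)[OF assms(1) R]) (use assms in auto)
  moreover have "integral {1..u} g + integral {u..v} g = integral {1..v} g"
    by (rule Henstock_Kurzweil_Integration.integral_combine) (use assms integrable_on_subinterval[OF gi] in auto)
  ultimately show ?thesis by linarith
qed

lemma aux1: "\<bar>y::real\<bar> \<le> (\<bar>p\<bar> + 1) * \<bar>y\<bar>"
proof -
  have "0 \<le> \<bar>p\<bar> * \<bar>y\<bar>" by simp
  then show ?thesis by (simp add: distrib_right)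
qed

lemma aux2: "(y::real)\<^sup>2 \<le> (p\<^sup>2 + 1) * y\<^sup>2"
proof -
  have "0 \<le> p\<^sup>2 * y\<^sup>2" by simp
  then show ?thesis by (simp add: distrib_right)
qed

lemma patch:
  assumes H: "H1 1 R h g" and ab: "1 \<le> a" "a \<le> b" "b \<le> R"
    and ea: "p * h a + q = h a" and eb: "p * h b + q = h b"
  shows "H1 1 R (\<lambda>x. if x \<in> {a..b} then p * h x + q else h x) (\<lambda>x. if x \<in> {a..b} then p * g x else g x)"
proof -
  define k where "k = (\<lambda>x. if x \<in> {a..b} then p * h x + q else h x)"
  define g' where "g' = (\<lambda>x. if x \<in> {a..b} then p * g x else g x)"
  have R: "1 \<le> R" using ab by linarith
  have gi: "set_integrable lborel {1..R} g" and g2: "set_integrable lborel {1..R} (\<lambda>x. (g x)\<^sup>2)"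
    using H unfolding H1_def by (metis (no_types))+
  have mg: "set_borel_measurable lborel {1..R} g" using H1_D(5)[OF H R] .
  have mg2: "set_borel_measurable lborel {1..R} (\<lambda>x. (g x)\<^sup>2)" using H1_D(6)[OF H R] .
  have gHK: "g integrable_on {1..R}" using H1_D(1)[OF H R] .
  have e1: "(\<lambda>x. indicator {1..R} x *\<^sub>R g' x) = (\<lambda>x. (if x \<in> {a..b} then p else 1) * (indicator {1..R} x *\<^sub>R g x))"
    by (auto simp: fun_eq_iff g'_def)
  have e2: "(\<lambda>x. indicator {1..R} x *\<^sub>R (g' x)\<^sup>2) = (\<lambda>x. (if x \<in> {a..b} then p\<^sup>2 else 1) * (indicator {1..R} x *\<^sub>R (g x)\<^sup>2))"
    by (auto simp: fun_eq_iff g'_def power_mult_distrib)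
  have gi': "set_integrable lborel {1..R} g'"
  proof (rule set_integrable_bound[where f="\<lambda>x. (\<bar>p\<bar> + 1) * g x"])
    show "set_integrable lborel {1..R} (\<lambda>x. (\<bar>p\<bar> + 1) * g x)" using gi by simp
    show "set_borel_measurable lborel {1..R} g'" unfolding set_borel_measurable_def e1
      using mg unfolding set_borel_measurable_def by measurable
    show "AE x in lborel. x \<in> {1..R} \<longrightarrow> norm (g' x) \<le> norm ((\<bar>p\<bar> + 1) * g x)"
      proof (rule AE_I2, rule impI)
      fix x assume "x \<in> {1..R}"
      have "\<bar>p\<bar> * \<bar>g x\<bar> \<le> (\<bar>p\<bar> + 1) * \<bar>g x\<bar>" by (rule mult_right_mono) auto
      then show "norm (g' x) \<le> norm ((\<bar>p\<bar> + 1) * g x)"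
        unfolding g'_def using aux1[of "g x" p] by (auto simp: abs_mult)
    qed
  qed
  have g2': "set_integrable lborel {1..R} (\<lambda>x. (g' x)\<^sup>2)"
  proof (rule set_integrable_bound[where f="\<lambda>x. (p\<^sup>2 + 1) * (g x)\<^sup>2"])
    show "set_integrable lborel {1..R} (\<lambda>x. (p\<^sup>2 + 1) * (g x)\<^sup>2)" using g2 by simp
    show "set_borel_measurable lborel {1..R} (\<lambda>x. (g' x)\<^sup>2)" unfolding set_borel_measurable_def e2
      using mg2 unfolding set_borel_measurable_def by measurable
    show "AE x in lborel. x \<in> {1..R} \<longrightarrow> norm ((g' x)\<^sup>2) \<le> norm ((p\<^sup>2 + 1) * (g x)\<^sup>2)"
      proof (rule AE_I2, rule impI)
      fix x assume "x \<in> {1..R}"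
      have "p\<^sup>2 * (g x)\<^sup>2 \<le> (p\<^sup>2 + 1) * (g x)\<^sup>2" by (rule mult_right_mono) auto
      then show "norm ((g' x)\<^sup>2) \<le> norm ((p\<^sup>2 + 1) * (g x)\<^sup>2)"
        unfolding g'_def using aux2[of "g x" p] by (auto simp: power_mult_distrib)
    qed
  qed
  have g'HK: "g' integrable_on {1..R}" using set_borel_integral_eq_integral(1)[OF gi'] .
  have k1: "k 1 = h 1" using ab ea unfolding k_def by auto
  have outside: "integral {u..v} g' = integral {u..v} g" if "v \<le> a \<or> b \<le> u" for u v
    by (rule integral_spike[where S="{a,b}"]) (use that in \<open>auto simp: g'_def\<close>)
  have inside: "integral {u..v} g' = p * integral {u..v} g" if "a \<le> u" "v \<le> b" for u v
  proof -
    have "integral {u..v} g' = integral {u..v} (\<lambda>x. p * g x)"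
      by (rule integral_cong) (use that in \<open>auto simp: g'_def\<close>)
    then show ?thesis by simp
  qed
  have main: "k x = k 1 + integral {1..x} g'" if x: "x \<in> {1..R}" for x
  proof (cases "x < a")
    case True
    then have "k x = h x" unfolding k_def by auto
    moreover have "integral {1..x} g' = integral {1..x} g" using True by (intro outside) auto
    ultimately show ?thesis using k1 H1_diff[OF H, of 1 x] x True by auto
  next
    case False
    have ia: "integral {1..a} g' = h a - h 1" using outside[of a 1] H1_diff[OF H, of 1 a] ab by auto
    show ?thesis
    proof (cases "x \<le> b")
      case True
      have "integral {1..a} g' + integral {a..x} g' = integral {1..x} g'"
        by (rule Henstock_Kurzweil_Integration.integral_combine) (use False True x ab integrable_on_subinterval[OF g'HK] in auto)
      moreover have "integral {a..x} g' = p * (h x - h a)"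
        using inside[of a x] H1_diff[OF H, of a x] False True ab by auto
      moreover have "k x = p * h x + q" using False True unfolding k_def by auto
      ultimately show ?thesis using ia k1 ea by (auto simp: algebra_simps)
    next
      case False2: False
      have "integral {1..a} g' + integral {a..b} g' = integral {1..b} g'"
        by (rule Henstock_Kurzweil_Integration.integral_combine) (use False2 x ab integrable_on_subinterval[OF g'HK] in auto)
      moreover have "integral {1..b} g' + integral {b..x} g' = integral {1..x} g'"
        by (rule Henstock_Kurzweil_Integration.integral_combine) (use False2 x ab integrable_on_subinterval[OF g'HK] in auto)
      moreover have "integral {a..b} g' = p * (h b - h a)"
        using inside[of a b] H1_diff[OF H, of a b] ab by auto
      moreover have "integral {b..x} g' = h x - h b"
        using outside[of x b] H1_diff[OF H, of b x] False2 x ab by auto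
      moreover have "k x = h x" using False2 unfolding k_def by auto
      ultimately show ?thesis using ia k1 ea eb by (auto simp: algebra_simps)
    qed
  qed
  have "k x = k 1 + (LINT s:{1..x}|lborel. g' s)" if x: "x \<in> {1..R}" for x
  proof -
    have "set_integrable lborel {1..x} g'" by (rule set_integrable_subset[OF gi']) (use x in auto)
    then have "(LINT s:{1..x}|lborel. g' s) = integral {1..x} g'" by (rule set_borel_integral_eq_integral(2))
    then show ?thesis using main[OF x] by simp
  qed
  then show ?thesis unfolding H1_def k_def[symmetric] g'_def[symmetric] using gi' g2' by blast
qed



lemma last_crossing:
  fixes f :: "real \<Rightarrow> real"
  assumes cont: "continuous_on {u..v} f" and uv: "u \<le> v" and fu: "c \<le> f u" and fv: "f v < c"
  shows "\<exists>a\<in>{u..v}. f a = c \<and> (\<forall>y\<in>{a<..v}. f y < c)"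
proof -
  define S where "S = {y \<in> {u..v}. (\<lambda>_. c) y \<le> f y}"
  have cl: "closed S" unfolding S_def
    by (rule continuous_on_closed_Collect_le) (auto intro: cont continuous_on_const)
  have ne: "S \<noteq> {}" using fu uv unfolding S_def by auto
  have bd: "bdd_above S" unfolding S_def by (auto intro: bdd_aboveI[where M=v])
  define a where "a = Sup S"
  have aS: "a \<in> S" unfolding a_def by (rule closed_contains_Sup[OF ne bd cl])
  have up: "y \<le> a" if "y \<in> S" for y unfolding a_def by (rule cSup_upper[OF that bd])
  have lt: "\<forall>y\<in>{a<..v}. f y < c"
  proof
    fix y assume y: "y \<in> {a<..v}"
    have "y \<in> {u..v}" using y aS unfolding S_def by auto
    moreover have "\<not> y \<le> a" using y by auto
    ultimately show "f y < c" using up[of y] unfolding S_def by force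
  qed
  have "f a = c"
  proof -
    have av: "a \<le> v" using aS unfolding S_def by auto
    have "continuous_on {a..v} f" by (rule continuous_on_subset[OF cont]) (use aS in \<open>auto simp: S_def\<close>)
    moreover have "c \<le> f a" using aS unfolding S_def by auto
    ultimately obtain x where x: "a \<le> x" "x \<le> v" "f x = c" using IVT2'[of f v c a] fv av by auto
    then have "x \<in> S" using aS unfolding S_def by auto
    then have "x = a" using up[of x] x by auto
    then show ?thesis using x by simp
  qed
  then show ?thesis using aS lt unfolding S_def by auto
qed

lemma first_crossing:
  fixes f :: "real \<Rightarrow> real"
  assumes cont: "continuous_on {u..v} f" and uv: "u \<le> v" and fu: "f u < c" and fv: "c \<le> f v"
  shows "\<exists>b\<in>{u..v}. f b = c \<and> (\<forall>y\<in>{u..<b}. f y < c)"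
proof -
  define S where "S = {y \<in> {u..v}. (\<lambda>_. c) y \<le> f y}"
  have cl: "closed S" unfolding S_def
    by (rule continuous_on_closed_Collect_le) (auto intro: cont continuous_on_const)
  have ne: "S \<noteq> {}" using fv uv unfolding S_def by auto
  have bd: "bdd_below S" unfolding S_def by (auto intro: bdd_belowI[where m=u])
  define b where "b = Inf S"
  have bS: "b \<in> S" unfolding b_def by (rule closed_contains_Inf[OF ne bd cl])
  have lo: "b \<le> y" if "y \<in> S" for y unfolding b_def by (rule cInf_lower[OF that bd])
  have lt: "\<forall>y\<in>{u..<b}. f y < c"
  proof
    fix y assume y: "y \<in> {u..<b}"
    have "y \<in> {u..v}" using y bS unfolding S_def by auto
    moreover have "\<not> b \<le> y" using y by auto
    ultimately show "f y < c" using lo[of y] unfolding S_def by force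
  qed
  have "f b = c"
  proof -
    have ub: "u \<le> b" using bS unfolding S_def by auto
    have "continuous_on {u..b} f" by (rule continuous_on_subset[OF cont]) (use bS in \<open>auto simp: S_def\<close>)
    moreover have "c \<le> f b" using bS unfolding S_def by auto
    ultimately obtain x where x: "u \<le> x" "x \<le> b" "f x = c" using IVT'[of f u c b] fu ub by auto
    then have "x \<in> S" using bS unfolding S_def by auto
    then have "x = b" using lo[of x] x by auto
    then show ?thesis using x by simp
  qed
  then show ?thesis using bS lt unfolding S_def by auto
qed

lemma CS_ineq:
  fixes g :: "real \<Rightarrow> real"
  assumes gi: "g integrable_on {u..v}" and g2: "(\<lambda>x. (g x)\<^sup>2) integrable_on {u..v}" and uv: "u < v"
  shows "(integral {u..v} g)\<^sup>2 \<le> (v - u) * integral {u..v} (\<lambda>x. (g x)\<^sup>2)"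
proof -
  define I1 where "I1 = integral {u..v} g"
  define I2 where "I2 = integral {u..v} (\<lambda>x. (g x)\<^sup>2)"
  define m where "m = I1 / (v - u)"
  have e: "(\<lambda>x. (g x - m)\<^sup>2) = (\<lambda>x. ((g x)\<^sup>2 - (2 * m) * g x) + m\<^sup>2)"
    by (auto simp: fun_eq_iff power2_eq_square algebra_simps)
  have i1: "(\<lambda>x. (g x)\<^sup>2 - (2 * m) * g x) integrable_on {u..v}"
    by (intro integrable_diff g2 integrable_on_mult_right gi)
  have "integral {u..v} (\<lambda>x. (g x - m)\<^sup>2) = integral {u..v} (\<lambda>x. (g x)\<^sup>2 - (2 * m) * g x) + integral {u..v} (\<lambda>x. m\<^sup>2)"
    unfolding e by (rule integral_add[OF i1 integrable_const_ivl])
  also have "\<dots> = I2 - 2 * m * I1 + (v - u) * m\<^sup>2"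
    using uv by (simp add: integral_diff[OF g2 integrable_on_mult_right[OF gi]] I1_def I2_def)
  finally have eq: "integral {u..v} (\<lambda>x. (g x - m)\<^sup>2) = I2 - 2 * m * I1 + (v - u) * m\<^sup>2" .
  have "0 \<le> integral {u..v} (\<lambda>x. (g x - m)\<^sup>2)"
    by (rule integral_nonneg) (use i1 e integrable_add[OF i1 integrable_const_ivl[of "m\<^sup>2" u v]] in auto)
  then have "0 \<le> I2 - 2 * m * I1 + (v - u) * m\<^sup>2" using eq by simp
  moreover have vm: "(v - u) * m = I1" unfolding m_def using uv by simp
  ultimately have "0 \<le> I2 - m * I1" by (simp add: power2_eq_square algebra_simps)
  then have "0 \<le> (v - u) * (I2 - m * I1)" using uv by simp
  also have "\<dots> = (v - u) * I2 - ((v - u) * m) * I1" by (simp add: algebra_simps)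
  also have "\<dots> = (v - u) * I2 - I1\<^sup>2" unfolding vm by (simp add: power2_eq_square)
  finally show ?thesis unfolding I1_def I2_def by simp
qed

lemma pos_integral:
  fixes f :: "real \<Rightarrow> real"
  assumes cont: "continuous_on {a..b} f" and ab: "a < b" and pos: "\<And>x. x \<in> {a<..<b} \<Longrightarrow> 0 < f x"
  shows "0 < integral {a..b} f"
proof -
  have fi: "f integrable_on {a..b}" using integrable_continuous_interval[OF cont] .
  have nn: "0 \<le> f x" if "x \<in> {a..b}" for x
  proof -
    have "continuous (at x within {a..b}) f" using cont that continuous_on_eq_continuous_within by blast
    show ?thesis
    proof (rule ccontr)
      assume "\<not> 0 \<le> f x"
      then have fx: "f x < 0" by simp
      have "closure {a<..<b} = {a..b}" using ab by simp
      then have "x \<in> closure {a<..<b}" using that by simp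
      moreover have "\<forall>y\<in>{a<..<b}. 0 \<le> f y" using pos less_imp_le by blast
      moreover have "continuous_on (closure {a<..<b}) f" using cont ab by simp
      ultimately have "0 \<le> f x"
        using continuous_ge_on_closure[of "{a<..<b}" f x 0] by blast
      then show False using fx by simp
    qed
  qed
  have "0 \<le> integral {a..b} f" by (rule integral_nonneg[OF fi nn])
  moreover have "integral {a..b} f \<noteq> 0"
  proof
    assume z: "integral {a..b} f = 0"
    have h0: "(f has_integral 0) (cbox a b)" using z fi by (metis box_real(2) has_integral_integral)
    have c0: "continuous_on (cbox a b) f" using cont by simp
    have n0: "\<And>x. x \<in> box a b \<Longrightarrow> 0 \<le> f x" using pos by (simp add: less_imp_le)
    have ne: "box a b \<noteq> {}" using ab by simp
    have m0: "(a + b) / 2 \<in> cbox a b" using ab by simp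
    have "f ((a + b) / 2) = 0" by (rule has_integral_0_cbox_imp_0[OF c0 n0 h0 ne m0])
    moreover have "0 < f ((a + b) / 2)" using ab by (intro pos) auto
    ultimately show False by simp
  qed
  ultimately show ?thesis by simp
qed



lemma energy_patch:
  assumes H: "H1 1 R h g" and ab: "1 \<le> a" "a \<le> b" "b \<le> R"
    and ea: "p * h a + q = h a" and eb: "p * h b + q = h b"
  defines "k \<equiv> (\<lambda>x. if x \<in> {a..b} then p * h x + q else h x)"
    and "g' \<equiv> (\<lambda>x. if x \<in> {a..b} then p * g x else g x)"
  shows "H1 1 R k g'" "k 1 = h 1" "k R = h R"
    "energy t R h g - energy t R k g' = integral {a..b} (\<lambda>x. Ig t h g x - Ig t (\<lambda>x. p * h x + q) (\<lambda>x. p * g x) x)"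
    "(\<lambda>x. Ig t h g x - Ig t (\<lambda>x. p * h x + q) (\<lambda>x. p * g x) x) integrable_on {a..b}"
proof -
  show Hk: "H1 1 R k g'" unfolding k_def g'_def by (rule patch[OF H ab ea eb])
  show "k 1 = h 1" using ab ea unfolding k_def by auto
  show "k R = h R" using ab eb unfolding k_def by auto
  have R: "1 \<le> R" using ab by linarith
  define D where "D = (\<lambda>x. Ig t h g x - Ig t (\<lambda>x. p * h x + q) (\<lambda>x. p * g x) x)"
  have ih: "Ig t h g integrable_on {1..R}" using energy_HK(2)[OF H R] .
  have ik: "Ig t k g' integrable_on {1..R}" using energy_HK(2)[OF Hk R] .
  have idf: "(\<lambda>x. Ig t h g x - Ig t k g' x) integrable_on {1..R}" using integrable_diff[OF ih ik] .
  have fe: "(\<lambda>x. Ig t h g x - Ig t k g' x) = (\<lambda>x. if x \<in> {a..b} then D x else 0)"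
    by (auto simp: fun_eq_iff D_def Ig_def k_def g'_def)
  have "energy t R h g - energy t R k g' = integral {1..R} (Ig t h g) - integral {1..R} (Ig t k g')"
    using energy_HK(3)[OF H R] energy_HK(3)[OF Hk R] by simp
  also have "\<dots> = integral {1..R} (\<lambda>x. Ig t h g x - Ig t k g' x)" using integral_diff[OF ih ik] by simp
  also have "\<dots> = integral ({a..b} \<inter> {1..R}) D" unfolding fe by (rule integral_restrict_Int)
  also have "{a..b} \<inter> {1..R} = {a..b}" using ab by auto
  finally show "energy t R h g - energy t R k g' = integral {a..b} (\<lambda>x. Ig t h g x - Ig t (\<lambda>x. p * h x + q) (\<lambda>x. p * g x) x)"
    unfolding D_def .
  have "(\<lambda>x. Ig t h g x - Ig t k g' x) integrable_on {a..b}"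
    by (rule integrable_on_subinterval[OF idf]) (use ab in auto)
  then show "(\<lambda>x. Ig t h g x - Ig t (\<lambda>x. p * h x + q) (\<lambda>x. p * g x) x) integrable_on {a..b}"
    by (rule integrable_eq) (auto simp: Ig_def k_def g'_def)
qed

lemma hplus_ge: "t \<ge> 0 \<Longrightarrow> hplus t \<ge> 3/2"
proof -
  assume t: "t \<ge> 0"
  have "sqrt 9 \<le> sqrt (9 + 8 * t)" using t by (intro real_sqrt_le_mono) simp
  then have "3 \<le> sqrt (9 + 8 * t)" by simp
  then show ?thesis unfolding hplus_def by simp
qed

lemma quartic_nonneg: "0 \<le> 1 + 3 * (x::real)^4 - 4 * x^3"
proof -
  have "1 + 3 * x^4 - 4 * x^3 = (x - 1)\<^sup>2 * (2 * x\<^sup>2 + (x + 1)\<^sup>2)"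
    by (simp add: power2_eq_square power4_eq_xxxx power3_eq_cube algebra_simps)
  also have "\<dots> \<ge> 0" by simp
  finally show ?thesis by simp
qed

lemma W_nonneg:
  assumes "t \<ge> 0"
  shows "0 \<le> t / 8 * (1 - x\<^sup>2)\<^sup>2 + hplus t / 8 * (1 + 3 * x^4 - 4 * x^3)"
  using hplus_ge[OF assms] quartic_nonneg[of x] assms by simp



lemma step_nonneg:
  assumes R: "R > 1" and t: "t \<ge> 0" and H: "H1 1 R h g" and h1: "h 1 = 1" and hR: "h R = 1"
    and minim: "\<forall>k k'. H1 1 R k k' \<and> k 1 = 1 \<and> k R = 1 \<longrightarrow> energy t R h g \<le> energy t R k k'"
  shows "\<forall>x\<in>{1..R}. 0 \<le> h x"
proof (rule ccontr)
  assume "\<not> (\<forall>x\<in>{1..R}. 0 \<le> h x)"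
  then obtain x0 where x0: "x0 \<in> {1..R}" "h x0 < 0" by auto
  have cont: "continuous_on {1..R} h" using H1_D(4)[OF H] R by simp
  obtain a where a: "a \<in> {1..x0}" "h a = 0" "\<forall>y\<in>{a<..x0}. h y < 0"
    using last_crossing[of 1 x0 h 0] continuous_on_subset[OF cont, of "{1..x0}"] x0 h1 by auto
  obtain b where b: "b \<in> {x0..R}" "h b = 0" "\<forall>y\<in>{x0..<b}. h y < 0"
    using first_crossing[of x0 R h 0] continuous_on_subset[OF cont, of "{x0..R}"] x0 hR by auto
  have ax: "a < x0" using a x0 by (cases "a = x0") auto
  have xb: "x0 < b" using b x0 by (cases "b = x0") auto
  have neg: "h y < 0" if "y \<in> {a<..<b}" for y
    using a(3) b(3) that by (cases "y \<le> x0") auto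
  have ab: "1 \<le> a" "a \<le> b" "b \<le> R" using a b ax xb by auto
  have ea: "(-1) * h a + 0 = h a" and eb: "(-1) * h b + 0 = h b" using a b by auto
  note EP = energy_patch[OF H ab ea eb]
  define D where "D = (\<lambda>x. - hplus t * (h x)^3 * x\<^sup>2)"
  have De: "Ig t h g x - Ig t (\<lambda>x. (-1) * h x + 0) (\<lambda>x. (-1) * g x) x = D x" for x
    by (simp add: Ig_def D_def power2_eq_square power3_eq_cube power4_eq_xxxx algebra_simps)
  have "continuous_on {a..b} D" unfolding D_def
    by (intro continuous_intros continuous_on_subset[OF cont]) (use ab in auto)
  moreover have "0 < D x" if "x \<in> {a<..<b}" for x
  proof -
    have "h x < 0" using neg[OF that] .
    then have "(h x)^3 < 0" by simp
    moreover have "0 < hplus t" using hplus_ge[OF t] by simp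
    moreover have "0 < x\<^sup>2" using that ab by auto
    ultimately show ?thesis unfolding D_def by (simp add: mult_pos_neg mult_neg_pos)
  qed
  ultimately have posI: "0 < integral {a..b} D" using ax xb by (intro pos_integral) auto
  define k where "k = (\<lambda>x. if x \<in> {a..b} then (-1) * h x + 0 else h x)"
  define g' where "g' = (\<lambda>x. if x \<in> {a..b} then (-1) * g x else g x)"
  have Hk: "H1 1 R k g'" using EP(1) unfolding k_def g'_def .
  have k1: "k 1 = 1" using EP(2) h1 unfolding k_def by simp
  have kR: "k R = 1" using EP(3) hR unfolding k_def by simp
  have Dfun: "(\<lambda>x. Ig t h g x - Ig t (\<lambda>x. (-1) * h x + 0) (\<lambda>x. (-1) * g x) x) = D" by (rule ext) (rule De)
  have "energy t R h g - energy t R k g' = integral {a..b} D"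
    using EP(4)[of t] unfolding k_def g'_def Dfun .
  moreover have "energy t R h g \<le> energy t R k g'" using minim Hk k1 kR by blast
  ultimately show False using posI by linarith
qed



definition Wf :: "real \<Rightarrow> real \<Rightarrow> real" where
  "Wf t x = t / 8 * (1 - x\<^sup>2)\<^sup>2 + hplus t / 8 * (1 + 3 * x^4 - 4 * x^3)"

lemma Wf_nonneg: "t \<ge> 0 \<Longrightarrow> 0 \<le> Wf t x"
  unfolding Wf_def by (rule W_nonneg)

lemma Ig_alt: "x \<noteq> 0 \<Longrightarrow> Ig t h g x = (1/2) * (g x)\<^sup>2 * x\<^sup>2 + 3 * (h x)\<^sup>2 + Wf t (h x) * x\<^sup>2"
  unfolding Ig_def Wf_def by (simp add: field_simps)

lemma step_le1:
  assumes R: "R > 1" and t: "t \<ge> 0" and H: "H1 1 R h g" and h1: "h 1 = 1" and hR: "h R = 1"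
    and minim: "\<forall>k k'. H1 1 R k k' \<and> k 1 = 1 \<and> k R = 1 \<longrightarrow> energy t R h g \<le> energy t R k k'"
  shows "\<forall>x\<in>{1..R}. h x \<le> 1"
proof (rule ccontr)
  assume "\<not> (\<forall>x\<in>{1..R}. h x \<le> 1)"
  then obtain x0 where x0: "x0 \<in> {1..R}" "h x0 > 1" by auto
  have cont: "continuous_on {1..R} h" using H1_D(4)[OF H] R by simp
  have contm: "continuous_on {1..R} (\<lambda>x. - h x)" by (intro continuous_intros cont)
  obtain a where a: "a \<in> {1..x0}" "- h a = -1" "\<forall>y\<in>{a<..x0}. - h y < -1"
    using last_crossing[of 1 x0 "\<lambda>x. - h x" "-1"] continuous_on_subset[OF contm, of "{1..x0}"] x0 h1 by auto
  obtain b where b: "b \<in> {x0..R}" "- h b = -1" "\<forall>y\<in>{x0..<b}. - h y < -1"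
    using first_crossing[of x0 R "\<lambda>x. - h x" "-1"] continuous_on_subset[OF contm, of "{x0..R}"] x0 hR by auto
  have ax: "a < x0" using a x0 by (cases "a = x0") auto
  have xb: "x0 < b" using b x0 by (cases "b = x0") auto
  have big: "h y > 1" if "y \<in> {a<..<b}" for y
    using a(3) b(3) that by (cases "y \<le> x0") auto
  have ab: "1 \<le> a" "a \<le> b" "b \<le> R" using a b ax xb by auto
  have ea: "0 * h a + 1 = h a" and eb: "0 * h b + 1 = h b" using a b by auto
  note EP = energy_patch[OF H ab ea eb]
  define D where "D = (\<lambda>x. Ig t h g x - Ig t (\<lambda>x. 0 * h x + 1) (\<lambda>x. 0 * g x) x)"
  have Dge: "3 * ((h x)\<^sup>2 - 1) \<le> D x" if "x \<in> {a..b}" for x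
  proof -
    have x0': "x \<noteq> 0" using that ab by auto
    have "Wf t 1 = 0" unfolding Wf_def by simp
    then have "D x = (1/2) * (g x)\<^sup>2 * x\<^sup>2 + 3 * (h x)\<^sup>2 + Wf t (h x) * x\<^sup>2 - 3"
      unfolding D_def using Ig_alt[OF x0', of t h g] Ig_alt[OF x0', of t "\<lambda>x. 0 * h x + 1" "\<lambda>x. 0 * g x"] by simp
    moreover have "0 \<le> Wf t (h x) * x\<^sup>2" using Wf_nonneg[OF t] by simp
    moreover have "0 \<le> (1/2) * (g x)\<^sup>2 * x\<^sup>2" by simp
    ultimately show ?thesis by (simp add: algebra_simps)
  qed
  have "continuous_on {a..b} (\<lambda>x. 3 * ((h x)\<^sup>2 - 1))"
    by (intro continuous_intros continuous_on_subset[OF cont]) (use ab in auto)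
  moreover have "0 < 3 * ((h x)\<^sup>2 - 1)" if "x \<in> {a<..<b}" for x
  proof -
    have "1 < h x" using big[OF that] .
    then have "1 < (h x)\<^sup>2" by (metis less_1_mult power2_eq_square)
    then show ?thesis by simp
  qed
  ultimately have p0: "0 < integral {a..b} (\<lambda>x. 3 * ((h x)\<^sup>2 - 1))" using ax xb by (intro pos_integral) auto
  have "integral {a..b} (\<lambda>x. 3 * ((h x)\<^sup>2 - 1)) \<le> integral {a..b} D"
  proof (rule integral_le)
    show "(\<lambda>x. 3 * ((h x)\<^sup>2 - 1)) integrable_on {a..b}"
      by (intro integrable_continuous_interval continuous_intros continuous_on_subset[OF cont]) (use ab in auto)
    show "D integrable_on {a..b}" using EP(5)[of t] unfolding D_def .
  qed (rule Dge)
  then have posI: "0 < integral {a..b} D" using p0 by linarith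
  define k where "k = (\<lambda>x. if x \<in> {a..b} then 0 * h x + 1 else h x)"
  define g' where "g' = (\<lambda>x. if x \<in> {a..b} then 0 * g x else g x)"
  have Hk: "H1 1 R k g'" using EP(1) unfolding k_def g'_def .
  have k1: "k 1 = 1" using EP(2) h1 unfolding k_def by simp
  have kR: "k R = 1" using EP(3) hR unfolding k_def by simp
  have "energy t R h g - energy t R k g' = integral {a..b} D"
    using EP(4)[of t] unfolding k_def g'_def D_def .
  moreover have "energy t R h g \<le> energy t R k g'" using minim Hk k1 kR by blast
  ultimately show False using posI by linarith
qed



lemma W_diff_bound:
  assumes t: "t \<ge> 0" and x: "0 \<le> x" "x \<le> d" and d: "d \<le> 1"
  shows "Wf t d - Wf t x \<le> hplus t * d\<^sup>2"
proof -
  have hp: "0 \<le> hplus t" using hplus_ge[OF t] by simp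
  have "x\<^sup>2 \<le> d\<^sup>2" using x by (intro power_mono) auto
  have d2: "d\<^sup>2 \<le> 1" using x d by (simp add: power_le_one)
  have "(1 - d\<^sup>2)\<^sup>2 \<le> (1 - x\<^sup>2)\<^sup>2" using \<open>x\<^sup>2 \<le> d\<^sup>2\<close> d2 by (intro power_mono) auto
  then have A: "t / 8 * (1 - d\<^sup>2)\<^sup>2 - t / 8 * (1 - x\<^sup>2)\<^sup>2 \<le> 0" using t
    by (simp add: mult_left_mono algebra_simps)
  have d0: "0 \<le> d" using x by simp
  have "d^4 \<le> d\<^sup>2" using d0 d by (simp add: power_decreasing)
  moreover have "d^3 \<le> d\<^sup>2" using d0 d by (simp add: power_decreasing)
  moreover have "x^3 \<le> d^3" using x by (intro power_mono) auto
  moreover have "0 \<le> x^4" by simp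
  moreover have "0 \<le> d^3" using d0 by simp
  ultimately have C: "(1 + 3 * d^4 - 4 * d^3) - (1 + 3 * x^4 - 4 * x^3) \<le> 8 * d\<^sup>2"
    by linarith
  have "hplus t / 8 * ((1 + 3 * d^4 - 4 * d^3) - (1 + 3 * x^4 - 4 * x^3)) \<le> hplus t / 8 * (8 * d\<^sup>2)"
    using hp C by (intro mult_left_mono) auto
  then have B: "hplus t / 8 * (1 + 3 * d^4 - 4 * d^3) - hplus t / 8 * (1 + 3 * x^4 - 4 * x^3) \<le> hplus t * d\<^sup>2"
    by (simp only: right_diff_distrib)
  show ?thesis unfolding Wf_def using A B by linarith
qed

lemma step_pos:
  assumes R: "R > 1" and t: "t \<ge> 0" and H: "H1 1 R h g" and h1: "h 1 = 1" and hR: "h R = 1"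
    and minim: "\<forall>k k'. H1 1 R k k' \<and> k 1 = 1 \<and> k R = 1 \<longrightarrow> energy t R h g \<le> energy t R k k'"
    and nn: "\<forall>x\<in>{1..R}. 0 \<le> h x"
  shows "\<forall>x\<in>{1..R}. 0 < h x"
proof (rule ccontr)
  assume "\<not> (\<forall>x\<in>{1..R}. 0 < h x)"
  then obtain x0 where x0: "x0 \<in> {1..R}" "h x0 \<le> 0" by auto
  have cont: "continuous_on {1..R} h" using H1_D(4)[OF H] R by simp
  define Z where "Z = {y \<in> {1..R}. h y \<le> (\<lambda>_. 0) y}"
  have clZ: "closed Z" unfolding Z_def
    by (rule continuous_on_closed_Collect_le) (auto intro: cont continuous_on_const)
  have neZ: "Z \<noteq> {}" using x0 unfolding Z_def by auto
  have bdZ: "bdd_below Z" unfolding Z_def by (auto intro: bdd_belowI[where m=1])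
  define c where "c = Inf Z"
  have cZ: "c \<in> Z" unfolding c_def by (rule closed_contains_Inf[OF neZ bdZ clZ])
  have hc: "h c = 0" using cZ nn unfolding Z_def by force
  have c1: "1 < c" using cZ hc h1 unfolding Z_def by (cases "c = 1") auto
  have cR: "c \<le> R" using cZ unfolding Z_def by auto
  have posbefore: "0 < h y" if "y \<in> {1..<c}" for y
  proof (rule ccontr)
    assume "\<not> 0 < h y"
    then have "y \<in> Z" using that cR unfolding Z_def by auto
    then have "c \<le> y" unfolding c_def by (rule cInf_lower[OF _ bdZ])
    then show False using that by auto
  qed
  define hp where "hp = hplus t"
  have hp0: "0 < hp" using hplus_ge[OF t] unfolding hp_def by simp
  define K where "K = 3 + hp"
  define L where "L = K * R\<^sup>2 * (R - 1)"
  have K0: "0 < K" using hp0 unfolding K_def by simp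
  have L0: "0 < L" unfolding L_def using K0 R by simp
  define \<epsilon> where "\<epsilon> = min (c - 1) (1 / (4 * L))"
  have e0: "0 < \<epsilon>" unfolding \<epsilon>_def using c1 L0 by simp
  have e1: "\<epsilon> \<le> c - 1" unfolding \<epsilon>_def by simp
  have e2: "\<epsilon> \<le> 1 / (4 * L)" unfolding \<epsilon>_def by simp
  obtain xm where xm: "xm \<in> {1..c - \<epsilon>}" "\<forall>y\<in>{1..c - \<epsilon>}. h xm \<le> h y"
    using continuous_attains_inf[of "{1..c - \<epsilon>}" h] continuous_on_subset[OF cont, of "{1..c - \<epsilon>}"] e1 cR e0
    by auto
  have m0: "0 < h xm" using xm e0 by (intro posbefore) auto
  define \<delta> where "\<delta> = min (h xm) (1/2)"
  have d0: "0 < \<delta>" unfolding \<delta>_def using m0 by simp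
  have d1: "\<delta> \<le> 1/2" unfolding \<delta>_def by simp
  have "h xm \<le> h (c - \<epsilon>)" using xm(2) e1 e0 by auto
  then have hce: "\<delta> \<le> h (c - \<epsilon>)" unfolding \<delta>_def by simp
  obtain a where a: "a \<in> {c - \<epsilon>..c}" "h a = \<delta>" "\<forall>y\<in>{a<..c}. h y < \<delta>"
    using last_crossing[of "c - \<epsilon>" c h \<delta>] continuous_on_subset[OF cont, of "{c - \<epsilon>..c}"] e0 e1 cR hce hc d0
    by auto
  have ccR: "continuous_on {c..R} h" by (rule continuous_on_subset[OF cont]) (use c1 in auto)
  obtain b where b: "b \<in> {c..R}" "h b = \<delta>" "\<forall>y\<in>{c..<b}. h y < \<delta>"
    using first_crossing[OF ccR cR, of \<delta>] hR hc d0 d1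
    by auto
  have ac: "a < c" using a hc d0 by (cases "a = c") auto
  have cb: "c < b" using b hc d0 by (cases "b = c") auto
  have ab: "1 \<le> a" "a \<le> b" "b \<le> R" using a b ac cb e1 by auto
  have hab: "0 \<le> h y \<and> h y \<le> \<delta>" if "y \<in> {a..b}" for y
  proof -
    have "0 \<le> h y" using nn that ab by auto
    moreover have "h y \<le> \<delta>"
      using a(2,3) b(2,3) that by (cases "y \<le> c"; cases "y = a"; cases "y = b") (auto simp: less_imp_le)
    ultimately show ?thesis by simp
  qed
  have ea: "0 * h a + \<delta> = h a" and eb: "0 * h b + \<delta> = h b" using a b by auto
  note EP = energy_patch[OF H ab ea eb]
  define D where "D = (\<lambda>x. Ig t h g x - Ig t (\<lambda>x. 0 * h x + \<delta>) (\<lambda>x. 0 * g x) x)"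
  have Dge: "(1/2) * (g x)\<^sup>2 - K * \<delta>\<^sup>2 * R\<^sup>2 \<le> D x" if x: "x \<in> {a..b}" for x
  proof -
    have xnz: "x \<noteq> 0" using x ab by auto
    have x1: "1 \<le> x\<^sup>2" using x ab by (simp add: one_le_power)
    have xR: "x\<^sup>2 \<le> R\<^sup>2" using x ab by (intro power_mono) auto
    have De: "D x = (1/2) * (g x)\<^sup>2 * x\<^sup>2 + 3 * (h x)\<^sup>2 - 3 * \<delta>\<^sup>2 - (Wf t \<delta> - Wf t (h x)) * x\<^sup>2"
      unfolding D_def using Ig_alt[OF xnz, of t h g] Ig_alt[OF xnz, of t "\<lambda>x. 0 * h x + \<delta>" "\<lambda>x. 0 * g x"]
      by (simp add: algebra_simps)
    have Wb: "Wf t \<delta> - Wf t (h x) \<le> hp * \<delta>\<^sup>2" unfolding hp_def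
      using W_diff_bound[OF t, of "h x" \<delta>] hab[OF x] d1 by auto
    have "(Wf t \<delta> - Wf t (h x)) * x\<^sup>2 \<le> (hp * \<delta>\<^sup>2) * x\<^sup>2" using Wb by (intro mult_right_mono) auto
    also have "\<dots> \<le> (hp * \<delta>\<^sup>2) * R\<^sup>2" using xR hp0 by (intro mult_left_mono) auto
    finally have W2: "(Wf t \<delta> - Wf t (h x)) * x\<^sup>2 \<le> hp * \<delta>\<^sup>2 * R\<^sup>2" .
    have "1 \<le> R\<^sup>2" using R by (simp add: one_le_power)
    then have "3 * \<delta>\<^sup>2 * 1 \<le> 3 * \<delta>\<^sup>2 * R\<^sup>2" by (intro mult_left_mono) auto
    moreover have "(1/2) * (g x)\<^sup>2 \<le> (1/2) * (g x)\<^sup>2 * x\<^sup>2" using x1 by (simp add: mult_le_cancel_left1)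
    moreover have "0 \<le> 3 * (h x)\<^sup>2" by simp
    moreover have "K * \<delta>\<^sup>2 * R\<^sup>2 = 3 * \<delta>\<^sup>2 * R\<^sup>2 + hp * \<delta>\<^sup>2 * R\<^sup>2" unfolding K_def by (simp add: algebra_simps)
    ultimately show ?thesis using De W2 by linarith
  qed
  have gHK: "g integrable_on {1..R}" and g2HK: "(\<lambda>x. (g x)\<^sup>2) integrable_on {1..R}"
    using H1_D(1,2)[OF H] R by auto
  have g2ab: "(\<lambda>x. (g x)\<^sup>2) integrable_on {a..b}" by (rule integrable_on_subinterval[OF g2HK]) (use ab in auto)
  have g2ac: "(\<lambda>x. (g x)\<^sup>2) integrable_on {a..c}" by (rule integrable_on_subinterval[OF g2HK]) (use ab cb in auto)
  have gac: "g integrable_on {a..c}" by (rule integrable_on_subinterval[OF gHK]) (use ab cb in auto)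
  define J where "J = integral {a..c} (\<lambda>x. (g x)\<^sup>2)"
  define J' where "J' = integral {a..b} (\<lambda>x. (g x)\<^sup>2)"
  have JJ: "J \<le> J'" unfolding J_def J'_def
    by (rule integral_subset_le) (use g2ab g2ac cb in auto)
  have "integral {a..c} g = h c - h a" using H1_diff[OF H, of a c] ab ac cR by simp
  then have "\<delta>\<^sup>2 \<le> (c - a) * J" using CS_ineq[OF gac g2ac ac] a hc unfolding J_def by simp
  also have "\<dots> \<le> \<epsilon> * J"
  proof (rule mult_right_mono)
    show "c - a \<le> \<epsilon>" using a by auto
    show "0 \<le> J" unfolding J_def by (rule integral_nonneg[OF g2ac]) simp
  qed
  also have "\<dots> \<le> (1 / (4 * L)) * J"
    using e2 by (intro mult_right_mono) (auto simp: J_def intro!: integral_nonneg[OF g2ac])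
  finally have "\<delta>\<^sup>2 \<le> J / (4 * L)" by simp
  then have J4: "4 * L * \<delta>\<^sup>2 \<le> J" using L0 by (simp add: field_simps)
  have "integral {a..b} (\<lambda>x. (1/2) * (g x)\<^sup>2 - K * \<delta>\<^sup>2 * R\<^sup>2) \<le> integral {a..b} D"
  proof (rule integral_le)
    show "(\<lambda>x. (1/2) * (g x)\<^sup>2 - K * \<delta>\<^sup>2 * R\<^sup>2) integrable_on {a..b}"
      by (intro integrable_diff integrable_on_mult_right g2ab integrable_const_ivl)
    show "D integrable_on {a..b}" using EP(5)[of t] unfolding D_def .
  qed (rule Dge)
  moreover have "integral {a..b} (\<lambda>x. (1/2) * (g x)\<^sup>2 - K * \<delta>\<^sup>2 * R\<^sup>2) = (1/2) * J' - (b - a) * (K * \<delta>\<^sup>2 * R\<^sup>2)"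
  proof -
    have "integral {a..b} (\<lambda>x. (1/2) * (g x)\<^sup>2 - K * \<delta>\<^sup>2 * R\<^sup>2)
       = integral {a..b} (\<lambda>x. (1/2) * (g x)\<^sup>2) - integral {a..b} (\<lambda>x. K * \<delta>\<^sup>2 * R\<^sup>2)"
      by (rule integral_diff[OF integrable_on_mult_right[OF g2ab] integrable_const_ivl])
    moreover have "integral {a..b} (\<lambda>x. (1/2) * (g x)\<^sup>2) = (1/2) * J'"
      unfolding J'_def by (rule integral_mult[OF g2ab, symmetric])
    moreover have "integral {a..b} (\<lambda>x. K * \<delta>\<^sup>2 * R\<^sup>2) = (b - a) * (K * \<delta>\<^sup>2 * R\<^sup>2)" using ab by simp
    ultimately show ?thesis by simp
  qed
  moreover have "(b - a) * (K * \<delta>\<^sup>2 * R\<^sup>2) \<le> (R - 1) * (K * \<delta>\<^sup>2 * R\<^sup>2)"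
    using ab K0 by (intro mult_right_mono) auto
  moreover have "(R - 1) * (K * \<delta>\<^sup>2 * R\<^sup>2) = L * \<delta>\<^sup>2" unfolding L_def by (simp add: algebra_simps)
  moreover have "0 < L * \<delta>\<^sup>2" using L0 d0 by simp
  ultimately have posI: "0 < integral {a..b} D" using JJ J4 by linarith
  define k where "k = (\<lambda>x. if x \<in> {a..b} then 0 * h x + \<delta> else h x)"
  define g' where "g' = (\<lambda>x. if x \<in> {a..b} then 0 * g x else g x)"
  have Hk: "H1 1 R k g'" using EP(1) unfolding k_def g'_def .
  have k1: "k 1 = 1" using EP(2) h1 unfolding k_def by simp
  have kR: "k R = 1" using EP(3) hR unfolding k_def by simp
  have "energy t R h g - energy t R k g' = integral {a..b} D"
    using EP(4)[of t] unfolding k_def g'_def D_def .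
  moreover have "energy t R h g \<le> energy t R k g'" using minim Hk k1 kR by blast
  ultimately show False using posI by linarith
qed



lemma H1_const: "H1 1 R (\<lambda>_. 1) (\<lambda>_. 0)"
  unfolding H1_def by (simp add: set_integrable_def set_lebesgue_integral_def)

lemma energy_const:
  assumes R: "1 \<le> R"
  shows "energy t R (\<lambda>_. 1) (\<lambda>_. 0) = 3 * (R - 1)"
proof -
  have "energy t R (\<lambda>_. 1) (\<lambda>_. 0) = integral {1..R} (Ig t (\<lambda>_. 1) (\<lambda>_. 0))"
    using energy_HK(3)[OF H1_const R] .
  also have "\<dots> = integral {1..R} (\<lambda>_. 3)"
  proof (rule integral_cong)
    fix x assume "x \<in> {1..R}"
    then have "x \<noteq> 0" by auto
    then show "Ig t (\<lambda>_. 1) (\<lambda>_. 0) x = 3" using Ig_alt[of x t "\<lambda>_. 1" "\<lambda>_. 0"] by (simp add: Wf_def)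
  qed
  also have "\<dots> = 3 * (R - 1)" using R by simp
  finally show ?thesis .
qed

lemma bounds:
  assumes R: "R > 1" and t: "t \<ge> 0" and H: "H1 1 R h g" and h1: "h 1 = 1" and hR: "h R = 1"
    and minim: "\<forall>k k'. H1 1 R k k' \<and> k 1 = 1 \<and> k R = 1 \<longrightarrow> energy t R h g \<le> energy t R k k'"
  shows "integral {1..R} (\<lambda>x. (g x)\<^sup>2) \<le> 6 * (R - 1)"
    "t / 8 * integral {1..R} (\<lambda>x. (1 - (h x)\<^sup>2)\<^sup>2) \<le> 3 * (R - 1)"
proof -
  have R1: "1 \<le> R" using R by simp
  have E: "integral {1..R} (Ig t h g) \<le> 3 * (R - 1)"
  proof -
    have "energy t R h g \<le> energy t R (\<lambda>_. 1) (\<lambda>_. 0)" using minim H1_const[of R] by blast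
    then show ?thesis using energy_const[OF R1, of t] energy_HK(3)[OF H R1, of t] by simp
  qed
  have iI: "Ig t h g integrable_on {1..R}" using energy_HK(2)[OF H R1] .
  have cont: "continuous_on {1..R} h" using H1_D(4)[OF H R1] .
  have g2: "(\<lambda>x. (g x)\<^sup>2) integrable_on {1..R}" using H1_D(2)[OF H R1] .
  have "integral {1..R} (\<lambda>x. (1/2) * (g x)\<^sup>2) \<le> integral {1..R} (Ig t h g)"
  proof (rule integral_le)
    show "(\<lambda>x. (1/2) * (g x)\<^sup>2) integrable_on {1..R}" using g2 by simp
    show "Ig t h g integrable_on {1..R}" by (rule iI)
    fix x assume x: "x \<in> {1..R}"
    then have xnz: "x \<noteq> 0" by auto
    have x1: "1 \<le> x\<^sup>2" using x by (simp add: one_le_power)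
    have "(1/2) * (g x)\<^sup>2 * 1 \<le> (1/2) * (g x)\<^sup>2 * x\<^sup>2" using x1 by (intro mult_left_mono) auto
    moreover have "0 \<le> Wf t (h x) * x\<^sup>2" using Wf_nonneg[OF t] by simp
    moreover have "0 \<le> 3 * (h x)\<^sup>2" by simp
    ultimately show "(1/2) * (g x)\<^sup>2 \<le> Ig t h g x" using Ig_alt[OF xnz, of t h g] by linarith
  qed
  moreover have "integral {1..R} (\<lambda>x. (1/2) * (g x)\<^sup>2) = (1/2) * integral {1..R} (\<lambda>x. (g x)\<^sup>2)"
    by (rule integral_mult[OF g2, symmetric])
  ultimately show "integral {1..R} (\<lambda>x. (g x)\<^sup>2) \<le> 6 * (R - 1)" using E by linarith
  have ci: "(\<lambda>x. (1 - (h x)\<^sup>2)\<^sup>2) integrable_on {1..R}"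
    by (intro integrable_continuous_interval continuous_intros cont)
  have "integral {1..R} (\<lambda>x. t / 8 * (1 - (h x)\<^sup>2)\<^sup>2) \<le> integral {1..R} (Ig t h g)"
  proof (rule integral_le)
    show "(\<lambda>x. t / 8 * (1 - (h x)\<^sup>2)\<^sup>2) integrable_on {1..R}" using integrable_on_mult_right[OF ci, of "t/8"] .
    show "Ig t h g integrable_on {1..R}" by (rule iI)
    fix x assume x: "x \<in> {1..R}"
    then have xnz: "x \<noteq> 0" by auto
    have x1: "1 \<le> x\<^sup>2" using x by (simp add: one_le_power)
    have hp: "0 \<le> hplus t / 8 * (1 + 3 * (h x)^4 - 4 * (h x)^3)"
      using hplus_ge[OF t] quartic_nonneg[of "h x"] by simp
    have "t / 8 * (1 - (h x)\<^sup>2)\<^sup>2 \<le> Wf t (h x)" unfolding Wf_def using hp by simp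
    also have "Wf t (h x) * 1 \<le> Wf t (h x) * x\<^sup>2" using x1 Wf_nonneg[OF t] by (intro mult_left_mono) auto
    finally have "t / 8 * (1 - (h x)\<^sup>2)\<^sup>2 \<le> Wf t (h x) * x\<^sup>2" by simp
    moreover have "0 \<le> (1/2) * (g x)\<^sup>2 * x\<^sup>2" by simp
    moreover have "0 \<le> 3 * (h x)\<^sup>2" by simp
    ultimately show "t / 8 * (1 - (h x)\<^sup>2)\<^sup>2 \<le> Ig t h g x" using Ig_alt[OF xnz, of t h g] by linarith
  qed
  moreover have "integral {1..R} (\<lambda>x. t / 8 * (1 - (h x)\<^sup>2)\<^sup>2) = t / 8 * integral {1..R} (\<lambda>x. (1 - (h x)\<^sup>2)\<^sup>2)"
    by (rule integral_mult[OF ci, symmetric])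
  ultimately show "t / 8 * integral {1..R} (\<lambda>x. (1 - (h x)\<^sup>2)\<^sup>2) \<le> 3 * (R - 1)" using E by linarith
qed

lemma holder:
  assumes R: "R > 1" and H: "H1 1 R h g" and G: "integral {1..R} (\<lambda>x. (g x)\<^sup>2) \<le> C"
    and x: "x \<in> {1..R}" and y: "y \<in> {1..R}" and xy: "x \<le> y"
  shows "(h y - h x)\<^sup>2 \<le> (y - x) * C"
proof (cases "x = y")
  case True
  then show ?thesis by simp
next
  case False
  then have xy': "x < y" using xy by simp
  have R1: "1 \<le> R" using R by simp
  have gHK: "g integrable_on {1..R}" and g2: "(\<lambda>x. (g x)\<^sup>2) integrable_on {1..R}" using H1_D(1,2)[OF H R1] by auto
  have gi: "g integrable_on {x..y}" by (rule integrable_on_subinterval[OF gHK]) (use x y in auto)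
  have g2i: "(\<lambda>x. (g x)\<^sup>2) integrable_on {x..y}" by (rule integrable_on_subinterval[OF g2]) (use x y in auto)
  have "h y - h x = integral {x..y} g" using H1_diff[OF H, of x y] x y xy by auto
  then have "(h y - h x)\<^sup>2 \<le> (y - x) * integral {x..y} (\<lambda>x. (g x)\<^sup>2)" using CS_ineq[OF gi g2i xy'] by simp
  also have "\<dots> \<le> (y - x) * C"
  proof (rule mult_left_mono)
    have "integral {x..y} (\<lambda>x. (g x)\<^sup>2) \<le> integral {1..R} (\<lambda>x. (g x)\<^sup>2)"
      by (rule integral_subset_le) (use x y g2i g2 in auto)
    then show "integral {x..y} (\<lambda>x. (g x)\<^sup>2) \<le> C" using G by linarith
  qed (use xy in auto)
  finally show ?thesis .
qed



lemma facts_t: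
  assumes R: "R > 1" and t: "t \<ge> 0" and M: "is_minimizer t R f"
  shows "\<forall>r\<in>{1..R}. 0 < f r \<and> f r \<le> 1"
    "\<exists>g. H1 1 R f g \<and> integral {1..R} (\<lambda>x. (g x)\<^sup>2) \<le> 6 * (R - 1)
        \<and> t / 8 * integral {1..R} (\<lambda>x. (1 - (f x)\<^sup>2)\<^sup>2) \<le> 3 * (R - 1)"
proof -
  obtain g where H: "H1 1 R f g" and f1: "f 1 = 1" and fR: "f R = 1"
    and minim: "\<forall>k k'. H1 1 R k k' \<and> k 1 = 1 \<and> k R = 1 \<longrightarrow> energy t R f g \<le> energy t R k k'"
    using M unfolding is_minimizer_def by blast
  have nn: "\<forall>x\<in>{1..R}. 0 \<le> f x" by (rule step_nonneg[OF R t H f1 fR minim])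
  have "\<forall>x\<in>{1..R}. 0 < f x" by (rule step_pos[OF R t H f1 fR minim nn])
  moreover have "\<forall>x\<in>{1..R}. f x \<le> 1" by (rule step_le1[OF R t H f1 fR minim])
  ultimately show "\<forall>r\<in>{1..R}. 0 < f r \<and> f r \<le> 1" by blast
  show "\<exists>g. H1 1 R f g \<and> integral {1..R} (\<lambda>x. (g x)\<^sup>2) \<le> 6 * (R - 1)
        \<and> t / 8 * integral {1..R} (\<lambda>x. (1 - (f x)\<^sup>2)\<^sup>2) \<le> 3 * (R - 1)"
    using H bounds[OF R t H f1 fR minim] by blast
qed

theorem lemma5p1:
  fixes R :: real and h :: "real \<Rightarrow> real \<Rightarrow> real"
  assumes "R > 1"
    and "\<And>t. t \<ge> 0 \<Longrightarrow> is_minimizer t R (h t)"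
  shows "(\<forall>t\<ge>0. \<forall>r\<in>{1..R}. 0 < h t r \<and> h t r \<le> 1)
         \<and> uniform_limit {1..R} h (\<lambda>_. 1) at_top"
proof
  note R = assms(1)
  show "\<forall>t\<ge>0. \<forall>r\<in>{1..R}. 0 < h t r \<and> h t r \<le> 1"
    using facts_t(1)[OF R _ assms(2)] by blast
  show "uniform_limit {1..R} h (\<lambda>_. 1) at_top"
  proof (rule uniform_limitI)
    fix \<epsilon> :: real assume e: "0 < \<epsilon>"
    define C where "C = 6 * (R - 1)"
    have C0: "0 < C" unfolding C_def using R by simp
    define d where "d = min (\<epsilon>\<^sup>2 / (4 * C)) ((R - 1) / 2)"
    have d0: "0 < d" unfolding d_def using e C0 R by simp
    have dC: "d * C \<le> \<epsilon>\<^sup>2 / 4"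
    proof -
      have "d * C \<le> (\<epsilon>\<^sup>2 / (4 * C)) * C" unfolding d_def using C0 by (intro mult_right_mono) auto
      also have "\<dots> = \<epsilon>\<^sup>2 / 4" using C0 by simp
      finally show ?thesis .
    qed
    have dR: "d \<le> (R - 1) / 2" unfolding d_def by (rule min.cobounded2)
    define T where "T = 96 * (R - 1) / (d * \<epsilon>\<^sup>2) + 1"
    have T0: "0 \<le> T" unfolding T_def using d0 e R by simp
    have "\<forall>t\<ge>T. \<forall>x\<in>{1..R}. dist (h t x) 1 < \<epsilon>"
    proof (intro allI impI ballI)
      fix t x assume tT: "T \<le> t" and x0: "x \<in> {1..R}"
      have t: "0 \<le> t" using tT T0 by simp
      have b01: "\<forall>r\<in>{1..R}. 0 < h t r \<and> h t r \<le> 1" using facts_t(1)[OF R t assms(2)[OF t]] .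
      obtain g where H: "H1 1 R (h t) g" and G: "integral {1..R} (\<lambda>x. (g x)\<^sup>2) \<le> C"
          and B: "t / 8 * integral {1..R} (\<lambda>x. (1 - (h t x)\<^sup>2)\<^sup>2) \<le> 3 * (R - 1)"
        using facts_t(2)[OF R t assms(2)[OF t]] unfolding C_def by blast
      show "dist (h t x) 1 < \<epsilon>"
      proof (rule ccontr)
        assume "\<not> dist (h t x) 1 < \<epsilon>"
        then have far: "h t x \<le> 1 - \<epsilon>" using b01 x0 by (auto simp: dist_real_def)
        define p where "p = (if x + d \<le> R then x else x - d)"
        have pJ: "1 \<le> p" "p + d \<le> R" "p \<le> x" "x \<le> p + d"
          unfolding p_def using x0 dR d0 by auto
        have lowJ: "\<epsilon>\<^sup>2 / 4 \<le> (1 - (h t y)\<^sup>2)\<^sup>2" if y: "y \<in> {p..p + d}" for y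
        proof -
          have yR: "y \<in> {1..R}" using y pJ by auto
          have "(h t y - h t x)\<^sup>2 \<le> \<bar>y - x\<bar> * C"
          proof (cases "x \<le> y")
            case True
            then show ?thesis using holder[OF R H G x0 yR True] by simp
          next
            case False
            then have "(h t x - h t y)\<^sup>2 \<le> (x - y) * C" using holder[OF R H G yR x0] by simp
            then show ?thesis using False by (simp add: power2_commute)
          qed
          also have "\<dots> \<le> d * C" using y pJ C0 by (intro mult_right_mono) auto
          also have "\<dots> \<le> (\<epsilon> / 2)\<^sup>2" using dC by (simp add: power_divide)
          finally have "\<bar>h t y - h t x\<bar> \<le> \<bar>\<epsilon> / 2\<bar>" by (simp only: abs_le_square_iff)
          then have "h t y - h t x \<le> \<epsilon> / 2" using e by linarith
          then have hy: "h t y \<le> 1 - \<epsilon> / 2" using far by linarith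
          have hy0: "0 \<le> h t y" "h t y \<le> 1" using b01 yR by (auto simp: less_imp_le)
          have "(h t y)\<^sup>2 \<le> h t y" using hy0 unfolding power2_eq_square by (simp add: mult_left_le)
          then have "\<epsilon> / 2 \<le> 1 - (h t y)\<^sup>2" using hy by linarith
          then have "(\<epsilon> / 2)\<^sup>2 \<le> (1 - (h t y)\<^sup>2)\<^sup>2" using e by (intro power_mono) auto
          then show ?thesis by (simp add: power_divide)
        qed
        have cont: "continuous_on {1..R} (h t)" using H1_D(4)[OF H] R by simp
        have ci: "(\<lambda>y. (1 - (h t y)\<^sup>2)\<^sup>2) integrable_on {1..R}"
          by (intro integrable_continuous_interval continuous_intros cont)
        have ciJ: "(\<lambda>y. (1 - (h t y)\<^sup>2)\<^sup>2) integrable_on {p..p + d}"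
          by (rule integrable_on_subinterval[OF ci]) (use pJ in auto)
        have "d * (\<epsilon>\<^sup>2 / 4) = integral {p..p + d} (\<lambda>y. \<epsilon>\<^sup>2 / 4)" using d0 by simp
        also have "\<dots> \<le> integral {p..p + d} (\<lambda>y. (1 - (h t y)\<^sup>2)\<^sup>2)"
          by (rule integral_le[OF integrable_const_ivl ciJ lowJ])
        also have "\<dots> \<le> integral {1..R} (\<lambda>y. (1 - (h t y)\<^sup>2)\<^sup>2)"
          by (rule integral_subset_le) (use pJ ciJ ci in auto)
        finally have I: "d * (\<epsilon>\<^sup>2 / 4) \<le> integral {1..R} (\<lambda>y. (1 - (h t y)\<^sup>2)\<^sup>2)" .
        have "t / 8 * (d * (\<epsilon>\<^sup>2 / 4)) \<le> 3 * (R - 1)"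
          using B I t by (meson mult_left_mono order_trans divide_nonneg_pos zero_less_numeral)
        then have "t * (d * \<epsilon>\<^sup>2) \<le> 96 * (R - 1)" by simp
        then have "t \<le> 96 * (R - 1) / (d * \<epsilon>\<^sup>2)" using d0 e by (simp add: field_simps)
        then show False using tT unfolding T_def by simp
      qed
    qed
    then show "\<forall>\<^sub>F t in at_top. \<forall>x\<in>{1..R}. dist (h t x) 1 < \<epsilon>"
      unfolding eventually_at_top_linorder by blast
  qed
qed

end
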